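(* For all $r\in[0,35]$ and all integers $n\ge73$, $|f(r)-f^{(n)}(r)|\le0.0052$, where $f^{(n)}(r)=\max_{4\le m\le n}f_m(r)$ and $f(r)=\sup_{m\ge4}f_m(r)$.
   Context: For $r\ge0$, $\mu_\pm=(1\pm\sqrt{1+4r})/2$, $\mu=\mu_-/\mu_+$, $\alpha_k(r)=\frac1{\mu_+}\frac{1-\mu^k}{1-\mu^{k+1}}$ for $k\ge1$, and for $m\ge4$ $$f_m(r)=r\alpha_{m-2}(r)\alpha_m(r)\Big[\frac{(1-\alpha_{m-1}(r)(1+r))^2}{1+2r}+\frac{r\alpha_{m-3}(r)(1-\alpha_{m-1}(r))^2}{1+r}\Big].$$ *)

theory Defs
  imports Complex_Main
begin

definition mu_plus :: "real \<Rightarrow> real" where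
  "mu_plus r = (1 + sqrt (1 + 4 * r)) / 2"

definition mu_minus :: "real \<Rightarrow> real" where
  "mu_minus r = (1 - sqrt (1 + 4 * r)) / 2"

definition mu :: "real \<Rightarrow> real" where
  "mu r = mu_minus r / mu_plus r"

definition alpha :: "nat \<Rightarrow> real \<Rightarrow> real" where
  "alpha k r = (1 / mu_plus r) * ((1 - mu r ^ k) / (1 - mu r ^ (k + 1)))"

text \<open>f_m(r), intended for m >= 4.\<close>
definition fm :: "nat \<Rightarrow> real \<Rightarrow> real" where
  "fm m r = r * alpha (m - 2) r * alpha m r *
     ((1 - alpha (m - 1) r * (1 + r))^2 / (1 + 2 * r)
      + r * alpha (m - 3) r * (1 - alpha (m - 1) r)^2 / (1 + r))"

definition fn_max :: "nat \<Rightarrow> real \<Rightarrow> real" where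
  "fn_max n r = Max ((\<lambda>m. fm m r) ` {4..n})"

definition f_sup :: "real \<Rightarrow> real" where
  "f_sup r = (SUP m\<in>{4..}. fm m r)"

end

theory Submission
  imports Defs
begin

lemma alpha_close:
  fixes r :: real and k :: nat
  assumes r0: "0 \<le> r" and r35: "r \<le> 35" and k: "70 \<le> k"
  shows "\<bar>alpha k r - 1 / mu_plus r\<bar> \<le> (1 / mu_plus r) / 20000"
proof -
  define s where "s = sqrt (1 + 4*r)"
  have s1: "1 \<le> s" unfolding s_def using r0 by simp
  have "s \<le> sqrt 144" unfolding s_def using r35 by (intro real_sqrt_le_mono) simp
  then have s12: "s \<le> 12" by simp
  have mp: "mu_plus r = (1+s)/2" unfolding mu_plus_def s_def by simp
  have mn: "mu_minus r = (1-s)/2" unfolding mu_minus_def s_def by simp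
  have mm: "mu r = (1-s)/(1+s)" unfolding mu_def mn mp
    using s1 by (simp add: field_simps)
  define q where "q = mu r"
  have q0: "q \<le> 0" unfolding q_def mm using s1 by (simp add: divide_nonpos_pos)
  have qb: "\<bar>q\<bar> \<le> 11/13" unfolding q_def mm using s1 s12
    by (simp add: abs_if field_simps)
  have qk: "\<bar>q\<bar>^k \<le> 1/80000"
  proof -
    have "\<bar>q\<bar>^k \<le> \<bar>q\<bar>^70" using qb k by (intro power_decreasing) auto
    also have "\<dots> \<le> (11/13)^70" using qb by (intro power_mono) auto
    also have "\<dots> \<le> 1/80000" by (simp add: power_divide)
    finally show ?thesis .
  qed
  have qk1: "\<bar>q^(k+1)\<bar> \<le> 1/80000"
  proof -
    have "\<bar>q^(k+1)\<bar> = \<bar>q\<bar>^k * \<bar>q\<bar>" by (simp add: power_abs abs_mult)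
    also have "\<dots> \<le> \<bar>q\<bar>^k * 1" using qb by (intro mult_left_mono) auto
    finally show ?thesis using qk by simp
  qed
  have den: "1 - q^(k+1) \<ge> 1/2" using qk1 by (simp add: abs_le_iff)
  define a where "a = 1 / mu_plus r"
  have a0: "a > 0" unfolding a_def mp using s1 by simp
  have "alpha k r - a = a * ((1 - q^k)/(1 - q^(k+1)) - 1)"
    unfolding alpha_def a_def q_def by (simp add: algebra_simps)
  also have "\<dots> = a * (q^k * (q - 1) / (1 - q^(k+1)))"
    using den by (simp add: field_simps)
  finally have eq: "alpha k r - a = a * (q^k * (q - 1) / (1 - q^(k+1)))" .
  have "\<bar>q^k * (q - 1) / (1 - q^(k+1))\<bar> = \<bar>q\<bar>^k * \<bar>q - 1\<bar> / (1 - q^(k+1))"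
    using den by (simp add: abs_mult power_abs)
  also have "\<dots> \<le> (1/80000) * 2 / (1/2)"
  proof (intro frac_le mult_mono)
    show "\<bar>q - 1\<bar> \<le> 2" using qb by (simp add: abs_le_iff)
  qed (use qk den in auto)
  finally have B: "\<bar>q^k * (q - 1) / (1 - q^(k+1))\<bar> \<le> 1/20000" by simp
  have "\<bar>alpha k r - a\<bar> = a * \<bar>q^k * (q - 1) / (1 - q^(k+1))\<bar>"
    unfolding eq abs_mult using a0 by simp
  also have "\<dots> \<le> a * (1/20000)" using B a0 by (intro mult_left_mono) auto
  finally have "\<bar>alpha k r - a\<bar> \<le> a * (1/20000)" .
  then show ?thesis unfolding a_def by simp
qed

lemma absD: "\<bar>x - a\<bar> \<le> (c::real) \<Longrightarrow> a - c \<le> x \<and> x \<le> a + c" by auto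

lemma keyB:
  fixes r a z u w v :: real
  assumes r0: "0 \<le> r" and r35: "r \<le> 35" and a1: "2/13 \<le> a" and a2: "a \<le> 1"
    and rel: "r*a^2 = 1 - a"
    and hz: "\<bar>z - a\<bar> \<le> a/20000" and hu: "\<bar>u - a\<bar> \<le> a/20000"
    and hw: "\<bar>w - a\<bar> \<le> a/20000" and hv: "\<bar>v - a\<bar> \<le> a/20000"
  shows "\<bar>r*u*v*((1 - w*(1+r))^2/(1+2*r) + r*z*(1-w)^2/(1+r))
          - r*a*a*((1 - a*(1+r))^2/(1+2*r) + r*a*(1-a)^2/(1+r))\<bar> \<le> 33/20000"
proof -
  have a0: "a > 0" using a1 by simp
  have v0: "0 \<le> v" "v \<le> 2*a" using absD[OF hv] a0 by auto
  have u0: "0 \<le> u" "u \<le> 2*a" using absD[OF hu] a0 by auto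
  have z0: "0 \<le> z" "z \<le> 2*a" using absD[OF hz] a0 by auto
  have w0: "0 \<le> w" "w \<le> 2" using absD[OF hw] a0 a2 by auto
  have ra2: "r*a*a \<le> 1" using rel a0 by (simp add: power2_eq_square)
  have ra2': "0 \<le> r*a*a" using r0 a0 by simp
  have h1: "\<bar>r*u*v - r*a*a\<bar> \<le> 3/20000"
  proof -
    have "r*u*v - r*a*a = r*((u-a)*v + a*(v-a))" by (simp add: algebra_simps)
    then have "\<bar>r*u*v - r*a*a\<bar> = r*\<bar>(u-a)*v + a*(v-a)\<bar>" using r0 by (simp add: abs_mult)
    also have "\<dots> \<le> r*(\<bar>u-a\<bar>*\<bar>v\<bar> + a*\<bar>v-a\<bar>)"
      using r0 a0 by (intro mult_left_mono) (auto simp: abs_mult intro: order.trans[OF abs_triangle_ineq])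
    also have "\<dots> \<le> r*(a/20000*(2*a) + a*(a/20000))"
      using r0 a0 v0 hu hv by (intro mult_left_mono add_mono mult_mono) auto
    also have "\<dots> = 3/20000 * (r*a*a)" by (simp add: algebra_simps)
    also have "\<dots> \<le> 3/20000" using ra2 by linarith
    finally show ?thesis .
  qed
  define X where "X = 1 - w*(1+r)"
  define X0 where "X0 = 1 - a*(1+r)"
  have d1: "\<bar>X - X0\<bar> \<le> (1+2*r)/20000"
  proof -
    have e: "X - X0 = (a-w)*(1+r)" unfolding X_def X0_def by (simp add: algebra_simps)
    have "\<bar>X - X0\<bar> = \<bar>w - a\<bar>*(1+r)" unfolding e abs_mult using r0
      by (simp add: abs_minus_commute)
    also have "\<dots> \<le> a/20000*(1+r)" using hw r0 by (intro mult_right_mono) auto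
    also have "\<dots> = (a*(1+r))/20000" by simp
    also have "\<dots> \<le> (1+2*r)/20000"
    proof -
      have "a*(1+r) \<le> 1+r" using mult_right_mono[OF a2, of "1+r"] r0 by simp
      then have "a*(1+r) \<le> 1+2*r" using r0 by linarith
      then show ?thesis by (rule divide_right_mono) simp
    qed
    finally show ?thesis .
  qed
  have ar: "a*r \<le> 13/2"
  proof -
    have "a*(a*r) \<le> 1" using ra2 by (metis mult.commute mult.assoc)
    moreover have "2/13*(a*r) \<le> a*(a*r)" using a1 a0 r0 by (intro mult_right_mono) auto
    ultimately show ?thesis by simp
  qed
  have X0b: "\<bar>X0\<bar> \<le> 17/2"
  proof -
    have "0 \<le> a*r" using a0 r0 by simp
    moreover have "X0 = 1 - a - a*r" by (simp add: X0_def algebra_simps)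
    ultimately have "-17/2 \<le> X0" "X0 \<le> 17/2" using ar a0 a2 by linarith+
    then show ?thesis by (intro abs_leI) auto
  qed
  have s: "\<bar>X + X0\<bar> \<le> 18"
  proof -
    have "\<bar>X + X0\<bar> \<le> \<bar>X - X0\<bar> + 2*\<bar>X0\<bar>" by (auto simp: abs_if)
    also have "\<dots> \<le> 71/20000 + 17" using d1 X0b r35 by simp
    finally show ?thesis by simp
  qed
  have pos: "0 < 1+2*r" using r0 by simp
  have hP: "\<bar>X^2/(1+2*r) - X0^2/(1+2*r)\<bar> \<le> 18/20000"
  proof -
    have "\<bar>X^2/(1+2*r) - X0^2/(1+2*r)\<bar> = \<bar>X - X0\<bar>*\<bar>X + X0\<bar>/(1+2*r)"
    proof -
      have "X^2/(1+2*r) - X0^2/(1+2*r) = ((X - X0)*(X + X0))/(1+2*r)"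
        by (simp add: power2_eq_square algebra_simps diff_divide_distrib)
      then show ?thesis using pos by (simp add: abs_mult)
    qed
    also have "\<dots> \<le> ((1+2*r)/20000)*18/(1+2*r)"
      using d1 s pos by (intro divide_right_mono mult_mono) auto
    also have "\<dots> = 18/20000" using pos by (simp add: field_simps)
    finally show ?thesis .
  qed
  have PA: "X0^2/(1+2*r) \<le> 1"
  proof -
    have aX: "a*X0 = - ((1-a)^2)" unfolding X0_def using rel by (simp add: power2_eq_square algebra_simps)
    have "a^2*X0^2 = (1-a)^2*(1-a)^2" using aX by (metis power_mult_distrib power2_minus power2_eq_square)
    also have "\<dots> \<le> (1-a)^2 * 1" using a0 a2 by (intro mult_left_mono) (auto simp: power_le_one)
    also have "\<dots> \<le> a^2*(1+2*r)" using rel by (simp add: algebra_simps power2_eq_square)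
    finally have "a^2*X0^2 \<le> a^2*(1+2*r)" .
    then have "X0^2 \<le> 1+2*r" using a0 by simp
    then show ?thesis using pos by simp
  qed
  have PW: "0 \<le> X^2/(1+2*r)" "X^2/(1+2*r) \<le> 2"
    using pos apply simp
    using absD[OF hP] PA by linarith
  have c1: "r/(1+r) \<le> 1" "0 \<le> r/(1+r)" using r0 by auto
  have q1: "(1-w)^2 \<le> 1"
  proof -
    have "\<bar>1-w\<bar> \<le> 1" using w0 by auto
    then have "\<bar>1-w\<bar>^2 \<le> 1" by (intro power_le_one) auto
    then show ?thesis by simp
  qed
  have hT0: "\<bar>z*(1-w)^2 - a*(1-a)^2\<bar> \<le> 3/20000"
  proof -
    have "z*(1-w)^2 - a*(1-a)^2 = (z-a)*(1-w)^2 + a*((a-w)*(2-w-a))"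
      by (simp add: algebra_simps power2_eq_square)
    then have "\<bar>z*(1-w)^2 - a*(1-a)^2\<bar> \<le> \<bar>z-a\<bar>*(1-w)^2 + a*(\<bar>a-w\<bar>*\<bar>2-w-a\<bar>)"
      using a0 by (simp add: abs_mult abs_triangle_ineq[THEN order.trans])
    also have "\<dots> \<le> (a/20000)*1 + a*((a/20000)*2)"
      using hz q1 hw a0 a2 w0 by (intro add_mono mult_mono mult_left_mono) (auto simp: abs_minus_commute abs_le_iff)
    also have "\<dots> \<le> 3/20000"
    proof -
      have "a*a \<le> 1" using a0 a2 by (intro mult_le_one) auto
      then show ?thesis using a2 by (simp add: field_simps)
    qed
    finally show ?thesis .
  qed
  have hT: "\<bar>r*z*(1-w)^2/(1+r) - r*a*(1-a)^2/(1+r)\<bar> \<le> 3/20000"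
  proof -
    have "\<bar>r*z*(1-w)^2/(1+r) - r*a*(1-a)^2/(1+r)\<bar> = r/(1+r) * \<bar>z*(1-w)^2 - a*(1-a)^2\<bar>"
    proof -
      have "r*z*(1-w)^2/(1+r) - r*a*(1-a)^2/(1+r) = r/(1+r) * (z*(1-w)^2 - a*(1-a)^2)"
        by (simp add: algebra_simps diff_divide_distrib)
      then show ?thesis using r0 by (simp add: abs_mult)
    qed
    also have "\<dots> \<le> 1 * (3/20000)" using c1 hT0 by (intro mult_mono) auto
    finally show ?thesis by simp
  qed
  have TW: "0 \<le> r*z*(1-w)^2/(1+r)" "r*z*(1-w)^2/(1+r) \<le> 2"
  proof -
    show "0 \<le> r*z*(1-w)^2/(1+r)" using r0 z0 by simp
    have "r*z*(1-w)^2/(1+r) = r/(1+r) * (z*(1-w)^2)" by simp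
    also have "\<dots> \<le> 1 * (2*1)" using c1 z0 q1 a2 by (intro mult_mono) auto
    finally show "r*z*(1-w)^2/(1+r) \<le> 2" by simp
  qed
  define G where "G = X^2/(1+2*r) + r*z*(1-w)^2/(1+r)"
  define G0 where "G0 = X0^2/(1+2*r) + r*a*(1-a)^2/(1+r)"
  have Gb: "\<bar>G\<bar> \<le> 4" using PW TW unfolding G_def by simp
  have GG: "\<bar>G - G0\<bar> \<le> 21/20000"
  proof -
    have "G - G0 \<le> 21/20000" "-(G - G0) \<le> 21/20000"
      using absD[OF hP] absD[OF hT] unfolding G_def G0_def by linarith+
    then show ?thesis by (intro abs_leI)
  qed
  have "r*u*v*G - r*a*a*G0 = (r*u*v - r*a*a)*G + (r*a*a)*(G - G0)" by (simp add: algebra_simps)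
  then have "\<bar>r*u*v*G - r*a*a*G0\<bar> \<le> \<bar>r*u*v - r*a*a\<bar>*\<bar>G\<bar> + (r*a*a)*\<bar>G - G0\<bar>"
    using ra2' r0 a0 abs_triangle_ineq[of "(r*u*v - r*a*a)*G" "r*a*a*(G-G0)"] by (simp add: abs_mult)
  also have "\<dots> \<le> (3/20000)*4 + 1*(21/20000)"
    using h1 Gb ra2 ra2' GG by (intro add_mono mult_mono) auto
  finally show ?thesis unfolding G_def G0_def X_def X0_def by simp
qed


lemma a_props:
  fixes r :: real
  assumes r0: "0 \<le> r" and r35: "r \<le> 35"
  shows "2/13 \<le> 1 / mu_plus r" "1 / mu_plus r \<le> 1" "r * (1 / mu_plus r)^2 = 1 - 1 / mu_plus r"
proof -
  define s where "s = sqrt (1 + 4*r)"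
  have s1: "1 \<le> s" unfolding s_def using r0 by simp
  have "s \<le> sqrt 144" unfolding s_def using r35 by (intro real_sqrt_le_mono) simp
  then have s12: "s \<le> 12" by simp
  have mp: "mu_plus r = (1+s)/2" unfolding mu_plus_def s_def by simp
  have ss: "s^2 = 1 + 4*r" unfolding s_def using r0 by simp
  have rr: "r = (s^2 - 1)/4" using ss by simp
  show "2/13 \<le> 1 / mu_plus r" unfolding mp using s1 s12 by (simp add: field_simps)
  show "1 / mu_plus r \<le> 1" unfolding mp using s1 by (simp add: field_simps)
  have "r * (2 / (1+s))^2 = 1 - 2 / (1+s)"
  proof -
    have "r * (2 / (1+s))^2 = (4*r) / (1+s)^2" by (simp add: power_divide)
    also have "\<dots> = (s^2 - 1) / (1+s)^2" using ss by simp
    also have "\<dots> = ((s-1)*(1+s))/((1+s)*(1+s))" by (simp add: power2_eq_square algebra_simps)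
    also have "\<dots> = (s-1)/(1+s)" using s1 by simp
    also have "\<dots> = 1 - 2/(1+s)" using s1 by (simp add: field_simps)
    finally show ?thesis .
  qed
  then show "r * (1 / mu_plus r)^2 = 1 - 1 / mu_plus r" unfolding mp by simp
qed

lemma fm_close:
  fixes r :: real and m :: nat
  assumes r0: "0 \<le> r" and r35: "r \<le> 35" and m: "73 \<le> m"
  shows "\<bar>fm m r - r*(1 / mu_plus r)*(1 / mu_plus r)*((1 - (1 / mu_plus r)*(1+r))^2/(1+2*r)
            + r*(1 / mu_plus r)*(1-(1 / mu_plus r))^2/(1+r))\<bar> \<le> 33/20000"
proof -
  have h: "\<And>k. 70 \<le> k \<Longrightarrow> \<bar>alpha k r - 1 / mu_plus r\<bar> \<le> (1 / mu_plus r) / 20000"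
    using alpha_close r0 r35 by blast
  have eq: "fm m r = r * alpha (m - 2) r * alpha m r *
     ((1 - alpha (m - 1) r * (1 + r))^2 / (1 + 2 * r)
      + r * alpha (m - 3) r * (1 - alpha (m - 1) r)^2 / (1 + r))" unfolding fm_def by simp
  have i: "70 \<le> m - 3" "70 \<le> m - 2" "70 \<le> m - 1" "70 \<le> m" using m by auto
  show ?thesis unfolding eq
    by (rule keyB[OF r0 r35 a_props[OF r0 r35] h[OF i(1)] h[OF i(2)] h[OF i(3)] h[OF i(4)]])
qed

theorem propositionA1:
  fixes r :: real and n :: nat
  assumes "0 \<le> r" and "r \<le> 35" and "73 \<le> n"
  shows "\<bar>f_sup r - fn_max n r\<bar> \<le> 0.0052"
proof -
  define L where "L = r*(1 / mu_plus r)*(1 / mu_plus r)*((1 - (1 / mu_plus r)*(1+r))^2/(1+2*r)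
            + r*(1 / mu_plus r)*(1-(1 / mu_plus r))^2/(1+r))"
  have close: "\<And>m. 73 \<le> m \<Longrightarrow> \<bar>fm m r - L\<bar> \<le> 33/20000"
    unfolding L_def using fm_close assms by blast
  define S where "S = (\<lambda>m. fm m r) ` {4..n}"
  have finS: "finite S" "S \<noteq> {}" unfolding S_def using assms by auto
  have fnS: "fn_max n r = Max S" unfolding fn_max_def S_def by simp
  have ge: "\<And>m. m \<in> {4..n} \<Longrightarrow> fm m r \<le> fn_max n r"
    unfolding fnS S_def using finS unfolding S_def by (intro Max_ge) auto
  have bound: "\<And>m. m \<in> {4..} \<Longrightarrow> fm m r \<le> fn_max n r + 0.0052"
  proof -
    fix m :: nat assume "m \<in> {4..}"
    show "fm m r \<le> fn_max n r + 0.0052"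
    proof (cases "m \<le> n")
      case True
      then show ?thesis using ge \<open>m \<in> {4..}\<close> by force
    next
      case False
      have "fm n r \<le> fn_max n r" using ge assms by auto
      moreover have "\<bar>fm m r - L\<bar> \<le> 33/20000" using close False assms by auto
      moreover have "\<bar>fm n r - L\<bar> \<le> 33/20000" using close assms by auto
      moreover have "(0.0052::real) = 104/20000" by simp
      ultimately show ?thesis using absD[of "fm m r" L] absD[of "fm n r" L] by linarith
    qed
  qed
  have bdd: "bdd_above ((\<lambda>m. fm m r) ` {4..})"
    using bound by (intro bdd_aboveI2) 
  have up: "f_sup r \<le> fn_max n r + 0.0052"
    unfolding f_sup_def using bound by (intro cSUP_least) auto
  obtain m0 where m0: "m0 \<in> {4..n}" "fn_max n r = fm m0 r"
    using Max_in[OF finS] fnS unfolding S_def by auto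
  have low: "fn_max n r \<le> f_sup r"
    unfolding f_sup_def m0(2) using m0(1) bdd by (intro cSUP_upper) auto
  show ?thesis using up low by simp
qed

end
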